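(* Let $f_1,\dots,f_n:\mathbb{R}^d\to\mathbb{R}$ satisfy Assumption A1 below, and write $F=(f_1,\dots,f_n)$. Define the map $x^*:\Delta^{n-1}\to\mathrm{Pareto}(F)$ by \[x^*(\beta)\equiv x_\beta:=\operatorname*{argmin}_{x\in\mathbb{R}^d} f_\beta(x).\] Then $x^*$ has derivative \[\nabla x^*(\beta)=-\nabla^2 f_\beta(x_\beta)^{-1}\nabla F(x_\beta)^\top,\] so that the map $\beta\mapsto(x_\beta,\beta)$ is a diffeomorphism of $\Delta^{n-1}$ with the Pareto manifold $\mathcal{P}(F)$.
   Context: Assumption A1: each $f_i$ is twice differentiable, $\mu$-strongly convex, and has $L$-Lipschitz continuous gradient, i.e. $\mu\mathbf{I}\preceq\nabla^2 f_i(x)\preceq L\mathbf{I}$ for all $x$ (with $0<\mu\le L$). $\Delta^{n-1}=\{\beta\in\mathbb{R}^n:\sum_i\beta_i=1,\ \beta_i\ge0\}$. For $\beta\in\Delta^{n-1}$, $f_\beta(x):=\sum_{i=1}^n\beta_i f_i(x)$. $\nabla F(x)\in\mathbb{R}^{n\times d}$ is the Jacobian of $F$ (rows $\nabla f_i(x)^\top$). A point $x$ is Pareto optimal if for all $x'$, $f_i(x')<f_i(x)$ for some $i$ implies $f_j(x')>f_j(x)$ for some $j$; $\mathrm{Pareto}(F)$ is the set of Pareto optimal points (under A1 it equals the set of $x$ with $\nabla f_\beta(x)=0$ for some $\beta\in\Delta^{n-1}$). The Pareto manifold is $\mathcal{P}(F)=\{(x,\beta)\in\mathbb{R}^d\times\Delta^{n-1}:\nabla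 f_\beta(x)=0\}$. *)

theory Defs
  imports "HOL-Analysis.Analysis"
begin

definition prob_simplex :: "(real ^ 'n::finite) set" where
  "prob_simplex = {\<beta>. (\<Sum>i\<in>UNIV. \<beta> $ i) = 1 \<and> (\<forall>i. 0 \<le> \<beta> $ i)}"

definition fbeta :: "('n::finite \<Rightarrow> real ^ 'd::finite \<Rightarrow> real) \<Rightarrow> real ^ 'n \<Rightarrow> real ^ 'd \<Rightarrow> real" where
  "fbeta f \<beta> x = (\<Sum>i\<in>UNIV. \<beta> $ i * f i x)"

definition xstar :: "('n::finite \<Rightarrow> real ^ 'd::finite \<Rightarrow> real) \<Rightarrow> real ^ 'n \<Rightarrow> real ^ 'd" where
  "xstar f \<beta> = (SOME x. \<forall>y. fbeta f \<beta> x \<le> fbeta f \<beta> y)"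

definition pareto_optimal :: "('n \<Rightarrow> 'a \<Rightarrow> real) \<Rightarrow> 'a \<Rightarrow> bool" where
  "pareto_optimal f x \<longleftrightarrow>
     (\<forall>x'. (\<exists>i. f i x' < f i x) \<longrightarrow> (\<exists>j. f j x' > f j x))"

definition Pareto :: "('n \<Rightarrow> 'a \<Rightarrow> real) \<Rightarrow> 'a set" where
  "Pareto f = {x. pareto_optimal f x}"

text \<open>Pareto manifold P(F) = {(x,beta) in R^d x Delta : grad f_beta(x) = 0}; the gradient
  of f_beta at x is given by the gradients g i x of the f i.\<close>
definition pareto_manifold ::
  "('n::finite \<Rightarrow> real ^ 'd::finite \<Rightarrow> real ^ 'd) \<Rightarrow> ((real ^ 'd) \<times> (real ^ 'n)) set" where
  "pareto_manifold g = {(x, \<beta>). \<beta> \<in> prob_simplex \<and> (\<Sum>i\<in>UNIV. \<beta> $ i *\<^sub>R g i x) = 0}"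

definition jacobianF :: "('n::finite \<Rightarrow> real ^ 'd::finite \<Rightarrow> real ^ 'd) \<Rightarrow> real ^ 'd \<Rightarrow> real ^ 'd ^ 'n" where
  "jacobianF g x = (\<chi> i. g i x)"

text \<open>Hessian of f_beta at x, from the Hessians H i x of the f i.\<close>
definition hessbeta ::
  "('n::finite \<Rightarrow> real ^ 'd::finite \<Rightarrow> real ^ 'd ^ 'd) \<Rightarrow> real ^ 'n \<Rightarrow> real ^ 'd \<Rightarrow> real ^ 'd ^ 'd" where
  "hessbeta H \<beta> x = (\<Sum>i\<in>UNIV. \<beta> $ i *\<^sub>R H i x)"

definition diffeomorphism_on ::
  "('a::euclidean_space \<Rightarrow> 'b::euclidean_space) \<Rightarrow> 'a set \<Rightarrow> 'b set \<Rightarrow> bool" where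
  "diffeomorphism_on \<Phi> S T \<longleftrightarrow>
     bij_betw \<Phi> S T \<and> \<Phi> differentiable_on S \<and>
     (\<exists>\<Psi>. \<Psi> differentiable_on T \<and> (\<forall>x\<in>S. \<Psi> (\<Phi> x) = x) \<and> (\<forall>y\<in>T. \<Phi> (\<Psi> y) = y))"

end

theory Submission
  imports Defs
begin

lemma implicit_deriv:
  fixes \<Phi> :: "('a::real_normed_vector \<times> 'b::real_normed_vector) \<Rightarrow> 'c::real_normed_vector"
  assumes der: "(\<Phi> has_derivative D) (at (b, X b))"
    and Dsplit: "\<And>h k. D (h,k) = A h + B k"
    and blB: "bounded_linear Binv" and inv: "\<And>k. Binv (B k) = k"
    and blA: "bounded_linear A"
    and zero: "\<And>b'. b' \<in> S \<Longrightarrow> \<Phi> (b', X b') = 0" and bS: "b \<in> S"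
    and lip: "\<And>b'. b' \<in> S \<Longrightarrow> norm (X b' - X b) \<le> C * norm (b' - b)"
  shows "(X has_derivative (\<lambda>h. - Binv (A h))) (at b within S)"
proof -
  interpret Bi: bounded_linear Binv by fact
  interpret Al: bounded_linear A by fact
  obtain K where K: "K > 0" "\<And>z. norm (Binv z) \<le> norm z * K" using Bi.pos_bounded by blast
  define C1 where "C1 = \<bar>C\<bar> + 1"
  have C1: "C1 > 0" unfolding C1_def by simp
  have lip1: "norm (X b' - X b) \<le> C1 * norm (b' - b)" if "b' \<in> S" for b'
  proof -
    have "C * norm (b' - b) \<le> C1 * norm (b' - b)" unfolding C1_def
      by (intro mult_right_mono) auto
    then show ?thesis using lip[OF that] by linarith
  qed
  have bl: "bounded_linear (\<lambda>h. - Binv (A h))"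
    by (intro bounded_linear_minus bounded_linear_compose[OF blB blA])
  show ?thesis unfolding has_derivative_within_alt
  proof (intro conjI bl allI impI)
    fix e :: real assume e: "e > 0"
    define e' where "e' = e / (K * (1 + C1))"
    have e': "e' > 0" unfolding e'_def using e K C1 by simp
    obtain d where d: "d > 0" and
      hd: "\<And>z. norm (z - (b, X b)) < d \<Longrightarrow> norm (\<Phi> z - \<Phi> (b, X b) - D (z - (b, X b))) \<le> e' * norm (z - (b, X b))"
      using der e' unfolding has_derivative_at_alt by blast
    show "\<exists>d>0. \<forall>y\<in>S. norm (y - b) < d \<longrightarrow> norm (X y - X b - - Binv (A (y - b))) \<le> e * norm (y - b)"
    proof (intro exI[of _ "d / (1 + C1)"] conjI ballI impI)
      show "d / (1 + C1) > 0" using d C1 by simp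
      fix y assume yS: "y \<in> S" and yd: "norm (y - b) < d / (1 + C1)"
      define z where "z = (y, X y)"
      have nz: "norm (z - (b, X b)) \<le> (1 + C1) * norm (y - b)"
      proof -
        have "norm (z - (b, X b)) \<le> norm (y - b) + norm (X y - X b)"
          unfolding z_def using norm_Pair_le[of "y - b" "X y - X b"] by simp
        then show ?thesis using lip1[OF yS] by (simp add: algebra_simps)
      qed
      have "(1 + C1) * norm (y - b) < d" using yd C1 by (simp add: field_simps)
      then have "norm (z - (b, X b)) < d" using nz by linarith
      from hd[OF this] have h1: "norm (\<Phi> z - \<Phi> (b, X b) - D (z - (b, X b))) \<le> e' * norm (z - (b, X b))" .
      define eps where "eps = \<Phi> z - \<Phi> (b, X b) - D (z - (b, X b))"
      have epsv: "eps = - A (y - b) - B (X y - X b)"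
        unfolding eps_def z_def using zero[OF yS] zero[OF bS] Dsplit by simp
      have "Binv eps = - Binv (A (y - b)) - (X y - X b)"
        unfolding epsv by (simp add: Bi.diff Bi.neg inv)
      then have eq: "X y - X b - - Binv (A (y - b)) = - Binv eps" by (simp add: algebra_simps)
      have "norm (- Binv eps) \<le> norm eps * K" using K(2) by simp
      also have "\<dots> \<le> e' * norm (z - (b, X b)) * K"
        using h1 K unfolding eps_def by (intro mult_right_mono) auto
      also have "\<dots> \<le> e' * ((1 + C1) * norm (y - b)) * K"
        using nz e' K by (intro mult_right_mono mult_left_mono) auto
      also have "\<dots> = e * norm (y - b)"
      proof -
        have "K * (1 + C1) \<noteq> 0" using K C1 by simp
        then show ?thesis unfolding e'_def by (simp add: field_simps)
      qed
      finally show "norm (X y - X b - - Binv (A (y - b))) \<le> e * norm (y - b)" unfolding eq .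
    qed
  qed
qed


lemma strong_mono:
  fixes G :: "real^'d::finite \<Rightarrow> real^'d" and M :: "real^'d \<Rightarrow> real^'d^'d"
  assumes der: "\<And>x. (G has_derivative (\<lambda>v. M x *v v)) (at x)"
    and pd: "\<And>x v. \<mu> * (v \<bullet> v) \<le> v \<bullet> (M x *v v)"
  shows "\<mu> * ((y - x) \<bullet> (y - x)) \<le> (G y - G x) \<bullet> (y - x)"
proof -
  define u where "u = y - x"
  define \<phi> where "\<phi> t = G (x + t *\<^sub>R u) \<bullet> u" for t :: real
  have d: "(\<phi> has_derivative (\<lambda>s. (M (x + t *\<^sub>R u) *v (s *\<^sub>R u)) \<bullet> u)) (at t within {0..1})" for t
  proof -
    have 1: "((\<lambda>t. x + t *\<^sub>R u) has_derivative (\<lambda>s. s *\<^sub>R u)) (at t within {0..1})"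
      by (auto intro!: derivative_eq_intros)
    have 2: "((\<lambda>t. G (x + t *\<^sub>R u)) has_derivative (\<lambda>s. M (x + t *\<^sub>R u) *v (s *\<^sub>R u))) (at t within {0..1})"
      using has_derivative_compose[OF 1 der] by (simp add: o_def)
    show ?thesis unfolding \<phi>_def
      using has_derivative_inner_left[OF 2, of u] by simp
  qed
  obtain \<xi> where "\<phi> 1 - \<phi> 0 = (M (x + \<xi> *\<^sub>R u) *v (1 *\<^sub>R u)) \<bullet> u"
    using mvt_simple[of 0 1 \<phi>, OF _ d] by force
  moreover have "\<phi> 1 = G y \<bullet> u" "\<phi> 0 = G x \<bullet> u" unfolding \<phi>_def u_def by auto
  ultimately have "(G y - G x) \<bullet> u = u \<bullet> (M (x + \<xi> *\<^sub>R u) *v u)"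
    by (simp add: inner_diff_left inner_diff_right inner_commute)
  then show ?thesis using pd[of u "x + \<xi> *\<^sub>R u"] unfolding u_def by simp
qed

lemma strong_convex:
  fixes F :: "real^'d::finite \<Rightarrow> real" and G :: "real^'d \<Rightarrow> real^'d"
  assumes der: "\<And>x. (F has_derivative (\<lambda>v. G x \<bullet> v)) (at x)"
    and mono: "\<And>x y. \<mu> * ((y - x) \<bullet> (y - x)) \<le> (G y - G x) \<bullet> (y - x)"
  shows "F x + G x \<bullet> (y - x) + \<mu> / 2 * ((y - x) \<bullet> (y - x)) \<le> F y"
proof -
  define u where "u = y - x"
  define q where "q = u \<bullet> u"
  define \<psi> where "\<psi> t = F (x + t *\<^sub>R u) - t * (G x \<bullet> u) - \<mu> / 2 * (t * t) * q" for t :: real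
  have d: "(\<psi> has_derivative (\<lambda>s. G (x + t *\<^sub>R u) \<bullet> (s *\<^sub>R u) - s * (G x \<bullet> u) - \<mu> / 2 * (t * s + s * t) * q)) (at t within {0..1})" for t
  proof -
    have 1: "((\<lambda>t. x + t *\<^sub>R u) has_derivative (\<lambda>s. s *\<^sub>R u)) (at t within {0..1})"
      by (auto intro!: derivative_eq_intros)
    have 2: "((\<lambda>t. F (x + t *\<^sub>R u)) has_derivative (\<lambda>s. G (x + t *\<^sub>R u) \<bullet> (s *\<^sub>R u))) (at t within {0..1})"
      using has_derivative_compose[OF 1 der] by (simp add: o_def)
    show ?thesis unfolding \<psi>_def
      by (auto intro!: derivative_eq_intros 2)
  qed
  obtain \<xi> where \<xi>: "\<xi> \<in> {0<..<1}" and eq: "\<psi> 1 - \<psi> 0 = G (x + \<xi> *\<^sub>R u) \<bullet> (1 *\<^sub>R u) - 1 * (G x \<bullet> u) - \<mu> / 2 * (\<xi> * 1 + 1 * \<xi>) * q"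
    using mvt_simple[of 0 1 \<psi>, OF _ d] by force
  have m: "\<mu> * ((\<xi> *\<^sub>R u) \<bullet> (\<xi> *\<^sub>R u)) \<le> (G (x + \<xi> *\<^sub>R u) - G x) \<bullet> (\<xi> *\<^sub>R u)"
    using mono[of "x + \<xi> *\<^sub>R u" x] by simp
  have e1: "(G (x + \<xi> *\<^sub>R u) - G x) \<bullet> (\<xi> *\<^sub>R u) = \<xi> * ((G (x + \<xi> *\<^sub>R u) - G x) \<bullet> u)"
    by (simp only: inner_scaleR_right)
  have e2: "(\<xi> *\<^sub>R u) \<bullet> (\<xi> *\<^sub>R u) = \<xi> * (\<xi> * q)" unfolding q_def
    by (simp only: inner_scaleR_right inner_scaleR_left)
  have "\<xi> * (\<mu> * \<xi> * q) \<le> \<xi> * ((G (x + \<xi> *\<^sub>R u) - G x) \<bullet> u)"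
    using m unfolding e1 e2 by (simp add: mult_ac)
  then have "\<mu> * \<xi> * q \<le> (G (x + \<xi> *\<^sub>R u) - G x) \<bullet> u"
    using \<xi> by (simp add: mult_le_cancel_left_pos)
  then have "\<psi> 1 - \<psi> 0 \<ge> 0" unfolding eq by (simp add: inner_diff_left algebra_simps)
  then show ?thesis unfolding \<psi>_def u_def q_def by (simp add: algebra_simps)
qed


lemma sum_mat_vec:
  fixes M :: "'i \<Rightarrow> real^'d::finite^'d"
  assumes "finite A"
  shows "(\<Sum>i\<in>A. c i *\<^sub>R M i) *v v = (\<Sum>i\<in>A. c i *\<^sub>R (M i *v v))"
  using assms
  by (induction A rule: finite_induct) (auto simp: matrix_vector_mult_add_rdistrib scaleR_matrix_vector_assoc)

theorem proposition1:
  fixes f :: "'n::finite \<Rightarrow> real ^ 'd::finite \<Rightarrow> real"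
    and g :: "'n \<Rightarrow> real ^ 'd \<Rightarrow> real ^ 'd"
    and H :: "'n \<Rightarrow> real ^ 'd \<Rightarrow> real ^ 'd ^ 'd"
    and \<mu> L :: real
  assumes mu_pos: "0 < \<mu>" and mu_le_L: "\<mu> \<le> L"
    and grad: "\<And>i x. (f i has_derivative (\<lambda>v. g i x \<bullet> v)) (at x)"
    and hess: "\<And>i x. (g i has_derivative (\<lambda>v. H i x *v v)) (at x)"
    and hess_bounds: "\<And>i x v. \<mu> * (v \<bullet> v) \<le> v \<bullet> (H i x *v v) \<and> v \<bullet> (H i x *v v) \<le> L * (v \<bullet> v)"
  shows "(\<forall>\<beta>\<in>prob_simplex. xstar f \<beta> \<in> Pareto f \<and>
            (xstar f has_derivative
               (\<lambda>h. - (matrix_inv (hessbeta H \<beta> (xstar f \<beta>))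
                        *v (transpose (jacobianF g (xstar f \<beta>)) *v h))))
            (at \<beta> within prob_simplex))
       \<and> diffeomorphism_on (\<lambda>\<beta>. (xstar f \<beta>, \<beta>)) prob_simplex (pareto_manifold g)"
proof -
  define G where "G \<beta> x = (\<Sum>i\<in>UNIV. \<beta> $ i *\<^sub>R g i x)" for \<beta> :: "real^'n" and x
  define S where "S = (prob_simplex :: (real^'n) set)"
  have Gfun: "G \<beta> = (\<lambda>x. \<Sum>i\<in>UNIV. \<beta> $ i *\<^sub>R g i x)" for \<beta> by (rule ext) (simp add: G_def)
  have Ffun: "fbeta f \<beta> = (\<lambda>x. \<Sum>i\<in>UNIV. \<beta> $ i * f i x)" for \<beta> by (rule ext) (simp add: fbeta_def)
  have fder: "(fbeta f \<beta> has_derivative (\<lambda>v. G \<beta> x \<bullet> v)) (at x)" for \<beta> x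
  proof -
    have "((\<lambda>x. \<Sum>i\<in>UNIV. \<beta>$i * f i x) has_derivative (\<lambda>v. \<Sum>i\<in>UNIV. \<beta>$i * (g i x \<bullet> v))) (at x)"
      by (intro has_derivative_sum has_derivative_mult_right grad)
    moreover have "(\<lambda>v. \<Sum>i\<in>UNIV. \<beta>$i * (g i x \<bullet> v)) = (\<lambda>v. G \<beta> x \<bullet> v)"
      unfolding G_def by (simp add: inner_sum_left)
    ultimately show ?thesis unfolding Ffun by simp
  qed
  have hmv: "hessbeta H \<beta> x *v v = (\<Sum>i\<in>UNIV. \<beta>$i *\<^sub>R (H i x *v v))" for \<beta> x v
    unfolding hessbeta_def by (rule sum_mat_vec) simp
  have gder: "(G \<beta> has_derivative (\<lambda>v. hessbeta H \<beta> x *v v)) (at x)" for \<beta> x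
    unfolding Gfun hmv by (intro has_derivative_sum has_derivative_scaleR_right hess)
  have Ssum: "(\<Sum>i\<in>UNIV. \<beta> $ i) = 1" and Spos: "\<And>i. 0 \<le> \<beta> $ i" if "\<beta> \<in> S" for \<beta>
    using that unfolding S_def prob_simplex_def by auto
  have hpd: "\<mu> * (v \<bullet> v) \<le> v \<bullet> (hessbeta H \<beta> x *v v)" if "\<beta> \<in> S" for \<beta> x v
  proof -
    have "\<mu> * (v \<bullet> v) = (\<Sum>i\<in>UNIV. \<beta>$i * (\<mu> * (v \<bullet> v)))"
      using Ssum[OF that] by (simp add: sum_distrib_right[symmetric])
    also have "\<dots> \<le> (\<Sum>i\<in>UNIV. \<beta>$i * (v \<bullet> (H i x *v v)))"
      using hess_bounds Spos[OF that] by (intro sum_mono mult_left_mono) auto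
    also have "\<dots> = v \<bullet> (hessbeta H \<beta> x *v v)"
      unfolding hmv by (simp add: inner_sum_right)
    finally show ?thesis .
  qed
  have mono: "\<mu> * ((y - x) \<bullet> (y - x)) \<le> (G \<beta> y - G \<beta> x) \<bullet> (y - x)" if "\<beta> \<in> S" for \<beta> x y
    by (rule strong_mono[OF gder hpd[OF that]])
  have cvx: "fbeta f \<beta> x + G \<beta> x \<bullet> (y - x) + \<mu> / 2 * ((y - x) \<bullet> (y - x)) \<le> fbeta f \<beta> y"
    if "\<beta> \<in> S" for \<beta> x y
    by (rule strong_convex[OF fder mono[OF that]])
  have crit_min: "fbeta f \<beta> x \<le> fbeta f \<beta> y" if "\<beta> \<in> S" "G \<beta> x = 0" for \<beta> x y
  proof -
    have "0 \<le> \<mu> / 2 * ((y - x) \<bullet> (y - x))" using mu_pos by simp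
    then show ?thesis using cvx[OF that(1), of x y] that(2) by simp
  qed
  have min_crit: "G \<beta> x = 0" if "\<forall>y. fbeta f \<beta> x \<le> fbeta f \<beta> y" for \<beta> x
  proof -
    have "(\<lambda>v. G \<beta> x \<bullet> v) = (\<lambda>v. 0)"
      by (rule differential_zero_maxmin[of x UNIV, OF _ _ fder]) (use that in auto)
    then have "G \<beta> x \<bullet> G \<beta> x = 0" by metis
    then show ?thesis by simp
  qed
  have uniq: "x = y" if "\<beta> \<in> S" "G \<beta> x = 0" "G \<beta> y = 0" for \<beta> x y
  proof -
    have "\<mu> * ((y - x) \<bullet> (y - x)) \<le> 0" using mono[OF that(1), of y x] that by simp
    then have "(y - x) \<bullet> (y - x) \<le> 0" using mu_pos by (simp add: mult_le_0_iff)
    then have "(y - x) \<bullet> (y - x) = 0" using inner_ge_zero[of "y - x"] by linarith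
    then show ?thesis by simp
  qed
  have exmin: "\<exists>x. \<forall>y. fbeta f \<beta> x \<le> fbeta f \<beta> y" if bS: "\<beta> \<in> S" for \<beta>
  proof -
    define R where "R = 2 * norm (G \<beta> 0) / \<mu>"
    have cont: "continuous_on (cball 0 R) (fbeta f \<beta>)"
      by (rule has_derivative_continuous_on[OF has_derivative_at_withinI[OF fder]])
    have "R \<ge> 0" unfolding R_def using mu_pos by simp
    then obtain m where m: "m \<in> cball 0 R" "\<forall>y\<in>cball 0 R. fbeta f \<beta> m \<le> fbeta f \<beta> y"
      using continuous_attains_inf[OF compact_cball _ cont] by fastforce
    have m0: "fbeta f \<beta> m \<le> fbeta f \<beta> 0" using m \<open>R \<ge> 0\<close> by simp
    show ?thesis
    proof (intro exI allI)
      fix y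
      show "fbeta f \<beta> m \<le> fbeta f \<beta> y"
      proof (cases "y \<in> cball 0 R")
        case True then show ?thesis using m by blast
      next
        case False
        then have ny: "norm y > R" by simp
        have c: "fbeta f \<beta> 0 + G \<beta> 0 \<bullet> y + \<mu> / 2 * (y \<bullet> y) \<le> fbeta f \<beta> y"
          using cvx[OF bS, of 0 y] by simp
        have cs: "- (norm (G \<beta> 0) * norm y) \<le> G \<beta> 0 \<bullet> y"
          using norm_cauchy_schwarz[of "- G \<beta> 0" y] by simp
        have yy: "y \<bullet> y = norm y * norm y" by (simp add: dot_square_norm power2_eq_square)
        have "\<mu> * norm y > 2 * norm (G \<beta> 0)" using ny mu_pos unfolding R_def
          by (simp add: field_simps)
        then have "\<mu> / 2 * (norm y * norm y) \<ge> norm (G \<beta> 0) * norm y"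
          using mult_right_mono[of "2 * norm (G \<beta> 0)" "\<mu> * norm y" "norm y"] by simp
        then show ?thesis using c[unfolded yy] cs m0 by linarith
      qed
    qed
  qed
  have xs_min: "\<forall>y. fbeta f \<beta> (xstar f \<beta>) \<le> fbeta f \<beta> y" if "\<beta> \<in> S" for \<beta>
    unfolding xstar_def using someI_ex[OF exmin[OF that]] .
  have xs_crit: "G \<beta> (xstar f \<beta>) = 0" if "\<beta> \<in> S" for \<beta>
    using min_crit[OF xs_min[OF that]] .
  have xs_uniq: "x = xstar f \<beta>" if "\<beta> \<in> S" "G \<beta> x = 0" for \<beta> x
    using uniq[OF that(1) that(2) xs_crit[OF that(1)]] .
  have pareto: "xstar f \<beta> \<in> Pareto f" if bS: "\<beta> \<in> S" for \<beta>
    unfolding Pareto_def pareto_optimal_def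
  proof (intro CollectI allI impI)
    fix x' assume "\<exists>i. f i x' < f i (xstar f \<beta>)"
    then obtain i where i: "f i x' < f i (xstar f \<beta>)" by blast
    show "\<exists>j. f j (xstar f \<beta>) < f j x'"
    proof (rule ccontr)
      assume "\<not> ?thesis"
      then have le: "\<And>j. f j x' \<le> f j (xstar f \<beta>)" by (simp add: not_less)
      have "fbeta f \<beta> x' \<le> fbeta f \<beta> (xstar f \<beta>)"
        unfolding fbeta_def using le Spos[OF bS] by (intro sum_mono mult_left_mono) auto
      then have "\<forall>y. fbeta f \<beta> x' \<le> fbeta f \<beta> y" using xs_min[OF bS] by (meson order_trans)
      then have "x' = xstar f \<beta>" using xs_uniq[OF bS min_crit] by blast
      then show False using i by simp
    qed
  qed
  have minv: "matrix_inv (hessbeta H \<beta> x) *v (hessbeta H \<beta> x *v k) = k" if bS: "\<beta> \<in> S" for \<beta> x k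
  proof -
    let ?A = "hessbeta H \<beta> x"
    have "\<forall>v. ?A *v v = 0 \<longrightarrow> v = 0"
    proof (intro allI impI)
      fix v assume "?A *v v = 0"
      then have "\<mu> * (v \<bullet> v) \<le> 0" using hpd[OF bS, of v x] by simp
      then have "v \<bullet> v \<le> 0" using mu_pos by (simp add: mult_le_0_iff)
      then have "v \<bullet> v = 0" using inner_ge_zero[of v] by linarith
      then show "v = 0" by simp
    qed
    then obtain B where B: "B ** ?A = mat 1" using matrix_left_invertible_ker by blast
    then have "?A ** B = mat 1" using matrix_left_right_inverse by blast
    with B have "?A ** matrix_inv ?A = mat 1 \<and> matrix_inv ?A ** ?A = mat 1"
      unfolding matrix_inv_def using someI[of "\<lambda>A'. ?A ** A' = mat 1 \<and> A' ** ?A = mat 1" B] B by blast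
    then show ?thesis by (simp add: matrix_vector_mul_assoc)
  qed
  have lip: "norm (xstar f \<beta>' - xstar f \<beta>) \<le> ((\<Sum>i\<in>UNIV. norm (g i (xstar f \<beta>))) / \<mu>) * norm (\<beta>' - \<beta>)"
    if bS: "\<beta> \<in> S" and bS': "\<beta>' \<in> S" for \<beta> \<beta>'
  proof -
    define x where "x = xstar f \<beta>"
    define x' where "x' = xstar f \<beta>'"
    define Cx where "Cx = (\<Sum>i\<in>UNIV. norm (g i x))"
    have "G \<beta>' x - G \<beta> x = (\<Sum>i\<in>UNIV. (\<beta>' - \<beta>) $ i *\<^sub>R g i x)"
      unfolding G_def by (simp add: sum_subtractf[symmetric] scaleR_diff_left)
    then have "norm (G \<beta>' x - G \<beta> x) \<le> (\<Sum>i\<in>UNIV. norm ((\<beta>' - \<beta>) $ i *\<^sub>R g i x))"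
      by (metis norm_sum)
    also have "\<dots> \<le> (\<Sum>i\<in>UNIV. norm (\<beta>' - \<beta>) * norm (g i x))"
    proof (intro sum_mono)
      fix i
      have "\<bar>(\<beta>' - \<beta>) $ i\<bar> \<le> norm (\<beta>' - \<beta>)" by (rule component_le_norm_cart)
      then show "norm ((\<beta>' - \<beta>) $ i *\<^sub>R g i x) \<le> norm (\<beta>' - \<beta>) * norm (g i x)"
        unfolding norm_scaleR real_norm_def by (rule mult_right_mono) simp
    qed
    also have "\<dots> = norm (\<beta>' - \<beta>) * Cx" unfolding Cx_def by (simp add: sum_distrib_left)
    finally have DG: "norm (G \<beta>' x - G \<beta> x) \<le> norm (\<beta>' - \<beta>) * Cx" .
    have "\<mu> * ((x' - x) \<bullet> (x' - x)) \<le> (G \<beta>' x' - G \<beta>' x) \<bullet> (x' - x)" by (rule mono[OF bS'])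
    also have "\<dots> = - ((G \<beta>' x - G \<beta> x) \<bullet> (x' - x))"
      using xs_crit[OF bS] xs_crit[OF bS'] unfolding x_def x'_def by (simp add: inner_diff_left)
    also have "\<dots> \<le> norm (G \<beta>' x - G \<beta> x) * norm (x' - x)"
      using norm_cauchy_schwarz[of "G \<beta> x - G \<beta>' x" "x' - x"]
      by (metis inner_minus_left minus_diff_eq norm_minus_commute)
    also have "\<dots> \<le> norm (\<beta>' - \<beta>) * Cx * norm (x' - x)" using DG by (simp add: mult_right_mono)
    finally have ineq: "\<mu> * (norm (x' - x) * norm (x' - x)) \<le> norm (\<beta>' - \<beta>) * Cx * norm (x' - x)"
      by (simp add: dot_square_norm power2_eq_square)
    have "norm (x' - x) \<le> Cx / \<mu> * norm (\<beta>' - \<beta>)"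
    proof (cases "norm (x' - x) = 0")
      case True
      have "Cx \<ge> 0" unfolding Cx_def by (simp add: sum_nonneg)
      then show ?thesis using True mu_pos by simp
    next
      case False
      then have "norm (x' - x) > 0" by simp
      then have "\<mu> * norm (x' - x) \<le> norm (\<beta>' - \<beta>) * Cx" using ineq
        by (metis mult.assoc mult_le_cancel_right_pos)
      then show ?thesis using mu_pos by (simp add: field_simps)
    qed
    then show ?thesis unfolding x_def x'_def Cx_def .
  qed
  have jtr: "transpose (jacobianF g x) *v h = (\<Sum>i\<in>UNIV. h $ i *\<^sub>R g i x)" for x h
    by (simp add: vec_eq_iff vector_matrix_mult_def jacobianF_def sum_component mult.commute)
  have deriv: "(xstar f has_derivative
               (\<lambda>h. - (matrix_inv (hessbeta H \<beta> (xstar f \<beta>))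
                        *v (transpose (jacobianF g (xstar f \<beta>)) *v h))))
            (at \<beta> within S)" if bS: "\<beta> \<in> S" for \<beta>
  proof -
    define x where "x = xstar f \<beta>"
    define \<Phi> where "\<Phi> z = G (fst z) (snd z)" for z :: "(real^'n) \<times> (real^'d)"
    have gs: "((\<lambda>z. g i (snd z)) has_derivative (\<lambda>h. H i x *v snd h)) (at (\<beta>, x))" for i
      using has_derivative_compose[OF has_derivative_snd[OF has_derivative_ident] hess, where x="(\<beta>, x)" and s=UNIV]
      by (simp add: o_def)
    have fs: "((\<lambda>z. fst z $ i) has_derivative (\<lambda>h. fst h $ i)) (at (\<beta>, x))" for i
      by (rule bounded_linear.has_derivative[OF bounded_linear_compose[OF bounded_linear_vec_nth bounded_linear_fst]])
         (rule has_derivative_ident)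
    have "(\<Phi> has_derivative (\<lambda>h. \<Sum>i\<in>UNIV. fst (\<beta>, x) $ i *\<^sub>R (H i x *v snd h) + fst h $ i *\<^sub>R g i (snd (\<beta>, x)))) (at (\<beta>, x))"
      unfolding \<Phi>_def G_def
      by (intro has_derivative_sum has_derivative_scaleR fs gs)
    moreover have "(\<lambda>h. \<Sum>i\<in>UNIV. fst (\<beta>, x) $ i *\<^sub>R (H i x *v snd h) + fst h $ i *\<^sub>R g i (snd (\<beta>, x)))
        = (\<lambda>h. transpose (jacobianF g x) *v fst h + hessbeta H \<beta> x *v snd h)"
      by (rule ext) (unfold jtr hmv fst_conv snd_conv sum.distrib, rule add.commute)
    ultimately have dPhi: "(\<Phi> has_derivative (\<lambda>h. transpose (jacobianF g x) *v fst h + hessbeta H \<beta> x *v snd h)) (at (\<beta>, xstar f \<beta>))"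
      unfolding x_def by simp
    show ?thesis
      unfolding x_def[symmetric]
      apply (rule implicit_deriv[where X = "xstar f" and b = \<beta> and A = "\<lambda>h. transpose (jacobianF g x) *v h"
              and B = "\<lambda>k. hessbeta H \<beta> x *v k" and Binv = "\<lambda>k. matrix_inv (hessbeta H \<beta> x) *v k"
              and S = S and C = "(\<Sum>i\<in>UNIV. norm (g i (xstar f \<beta>))) / \<mu>", OF dPhi, unfolded x_def[symmetric]])
      subgoal by simp
      subgoal by (rule matrix_vector_mul_bounded_linear)
      subgoal by (rule minv[OF bS])
      subgoal by (rule matrix_vector_mul_bounded_linear)
      subgoal using xs_crit unfolding \<Phi>_def by simp
      subgoal by (rule bS)
      subgoal using lip[OF bS] unfolding x_def by simp
      done
  qed
  have T_iff: "(x, \<beta>) \<in> pareto_manifold g \<longleftrightarrow> \<beta> \<in> S \<and> G \<beta> x = 0" for x \<beta>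
    unfolding pareto_manifold_def S_def G_def by simp
  have bij: "bij_betw (\<lambda>\<beta>. (xstar f \<beta>, \<beta>)) S (pareto_manifold g)"
    unfolding bij_betw_def
  proof
    show "inj_on (\<lambda>\<beta>. (xstar f \<beta>, \<beta>)) S" by (rule inj_onI) simp
    show "(\<lambda>\<beta>. (xstar f \<beta>, \<beta>)) ` S = pareto_manifold g"
    proof
      show "(\<lambda>\<beta>. (xstar f \<beta>, \<beta>)) ` S \<subseteq> pareto_manifold g"
        using T_iff xs_crit by auto
      show "pareto_manifold g \<subseteq> (\<lambda>\<beta>. (xstar f \<beta>, \<beta>)) ` S"
      proof
        fix z assume "z \<in> pareto_manifold g"
        moreover obtain x \<beta> where z: "z = (x, \<beta>)" by (cases z)
        ultimately have "\<beta> \<in> S" "G \<beta> x = 0" using T_iff by auto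
        then show "z \<in> (\<lambda>\<beta>. (xstar f \<beta>, \<beta>)) ` S" unfolding z using xs_uniq by auto
      qed
    qed
  qed
  have diffon: "(\<lambda>\<beta>. (xstar f \<beta>, \<beta>)) differentiable_on S"
    unfolding differentiable_on_def
  proof
    fix \<beta> assume "\<beta> \<in> S"
    from has_derivative_Pair[OF deriv[OF this] has_derivative_ident]
    show "(\<lambda>\<beta>. (xstar f \<beta>, \<beta>)) differentiable (at \<beta> within S)"
      unfolding differentiable_def by blast
  qed
  have diffeo: "diffeomorphism_on (\<lambda>\<beta>. (xstar f \<beta>, \<beta>)) S (pareto_manifold g)"
    unfolding diffeomorphism_on_def
  proof (intro conjI bij diffon exI[of _ snd] ballI)
    show "snd differentiable_on pareto_manifold g"
      by (rule bounded_linear_imp_differentiable_on[OF bounded_linear_snd])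
    fix \<beta> show "snd (xstar f \<beta>, \<beta>) = \<beta>" by simp
  next
    fix z assume "z \<in> pareto_manifold g"
    moreover obtain x \<beta> where z: "z = (x, \<beta>)" by (cases z)
    ultimately have "\<beta> \<in> S" "G \<beta> x = 0" using T_iff by auto
    then show "(xstar f (snd z), snd z) = z" unfolding z using xs_uniq by auto
  qed
  show ?thesis using pareto deriv diffeo unfolding S_def by blast
qed

end
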